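(* Suppose that every connected finite simple graph $G$ of order $n\geq 5$ with non-singular adjacency matrix satisfies $\mathcal{E}(G)\geq n-1+\bar d$. Then every finite simple graph $G$ (connected or not) of order $n\geq 5$ with non-singular adjacency matrix satisfies $\mathcal{E}(G)\geq n-1+\bar d$.
   Context: For a finite simple graph $G$ with $n$ vertices and $m$ edges, $A(G)$ is its adjacency matrix with eigenvalues $\lambda_1\ge\cdots\ge\lambda_n$, and the energy is $\mathcal{E}(G)=\sum_{i=1}^n|\lambda_i|$. $\bar d=2m/n$ is the average degree. *)

theory Defs
  imports "Jordan_Normal_Form.Char_Poly" "Jordan_Normal_Form.Determinant"
begin

definition simple_graph :: "nat \<Rightarrow> (nat \<Rightarrow> nat \<Rightarrow> bool) \<Rightarrow> bool" where
  "simple_graph n E \<longleftrightarrow>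
     (\<forall>i j. E i j \<longrightarrow> i < n \<and> j < n \<and> i \<noteq> j \<and> E j i)"

definition connected_graph :: "nat \<Rightarrow> (nat \<Rightarrow> nat \<Rightarrow> bool) \<Rightarrow> bool" where
  "connected_graph n E \<longleftrightarrow> (\<forall>i<n. \<forall>j<n. E\<^sup>*\<^sup>* i j)"

definition num_edges :: "nat \<Rightarrow> (nat \<Rightarrow> nat \<Rightarrow> bool) \<Rightarrow> nat" where
  "num_edges n E = card {(i, j). i < j \<and> j < n \<and> E i j}"

definition avg_degree :: "nat \<Rightarrow> (nat \<Rightarrow> nat \<Rightarrow> bool) \<Rightarrow> real" where
  "avg_degree n E = 2 * real (num_edges n E) / real n"

definition adj_matrix :: "nat \<Rightarrow> (nat \<Rightarrow> nat \<Rightarrow> bool) \<Rightarrow> real mat" where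
  "adj_matrix n E = mat n n (\<lambda>(i, j). if E i j then 1 else 0)"

text \<open>Energy: sum of absolute values of the eigenvalues (with multiplicity),
  i.e. of the roots of the characteristic polynomial (taken over the complex
  numbers; for a real symmetric matrix they are all real).\<close>
definition energy :: "nat \<Rightarrow> (nat \<Rightarrow> nat \<Rightarrow> bool) \<Rightarrow> real" where
  "energy n E = sum_mset (image_mset cmod
      (proots (char_poly (map_mat complex_of_real (adj_matrix n E)))))"

end

theory Submission
  imports Defs "Jordan_Normal_Form.Schur_Decomposition"
begin

lemma r22:
  fixes x y z w c :: real
  assumes "x>0" "y>0" "z<0" "w<0" "x+y+z+w=0" "x^2+y^2+z^2+w^2 = c"
    "x*y*z*w \<ge> 1" "4 \<le> c" "c \<le> 28"
  shows "x+y-z-w \<ge> (20+c)/6"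
proof -
  define p where "p = x+y"
  have zw: "z+w = -p" using assms(5) p_def by linarith
  have xy0: "x*y > 0" using assms by simp
  have zw0: "z*w > 0" using assms by (simp add: mult_neg_neg)
  have "(x*y)*(z*w) \<ge> 1" using assms(7) by (simp add: mult.assoc)
  have "(x*y + z*w)^2 \<ge> 4*((x*y)*(z*w))"
    using sum_squares_ge_zero[of "x*y - z*w" 0] by (simp add: power2_eq_square algebra_simps)
  hence s2: "(x*y + z*w)^2 \<ge> 4" using \<open>(x*y)*(z*w) \<ge> 1\<close> by linarith
  have s: "x*y + z*w \<ge> 2"
  proof (rule ccontr)
    assume "\<not> ?thesis"
    hence "x*y+z*w < 2" by simp
    moreover have "x*y+z*w > 0" using xy0 zw0 by simp
    ultimately have "(x*y + z*w)^2 < 2^2" by (intro power_strict_mono) auto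
    thus False using s2 by simp
  qed
  have c: "c = 2*p^2 - 2*(x*y+z*w)"
  proof -
    have "x^2+y^2 = p^2 - 2*x*y" unfolding p_def by (simp add: power2_eq_square algebra_simps)
    moreover have "z^2+w^2 = (z+w)^2 - 2*z*w" by (simp add: power2_eq_square algebra_simps)
    hence "z^2+w^2 = p^2 - 2*z*w" using zw by simp
    ultimately show ?thesis using assms(6) by (simp add: algebra_simps)
  qed
  have P: "(2*p)^2 \<ge> 2*c+8" using c s by (simp add: power2_eq_square algebra_simps)
  have "((20+c)/6)^2 \<le> 2*c+8"
  proof -
    have "(c-4)*(c-28) \<le> 0" using assms(8,9) by (simp add: mult_nonneg_nonpos)
    thus ?thesis by (simp add: power2_eq_square field_simps)
  qed
  hence "((20+c)/6)^2 \<le> (2*p)^2" using P by linarith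
  moreover have "2*p \<ge> 0" using assms(1,2) p_def by simp
  ultimately have "(20+c)/6 \<le> 2*p" using power2_le_imp_le by blast
  thus ?thesis using zw p_def by linarith
qed

lemma r13:
  fixes x u v t c :: real
  assumes "x>0" "u>0" "v>0" "t>0" "x = u+v+t" "x^2+u^2+v^2+t^2 = c"
    "x*u*v*t \<ge> 1" "c = 4 \<or> (6 \<le> c \<and> c \<le> 25)"
  shows "2*x \<ge> (20+c)/6"
proof -
  define e where "e = u*v+u*t+v*t"
  have e0: "e > 0" using assms(2-4) unfolding e_def by (intro add_pos_pos mult_pos_pos)
  have ee: "e^2 \<ge> 3*(u*v*t)*(u+v+t)"
  proof -
    have "0 \<le> (u*v-u*t)^2 + (u*t-v*t)^2 + (v*t-u*v)^2" by simp
    thus ?thesis unfolding e_def by (simp add: power2_eq_square algebra_simps)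
  qed
  hence e3: "e^2 \<ge> 3" using assms(5,7) by (simp add: algebra_simps)
  have eup: "3*e \<le> x^2"
  proof -
    have "0 \<le> (u-v)^2 + (u-t)^2 + (v-t)^2" by simp
    thus ?thesis unfolding e_def assms(5) by (simp add: power2_eq_square algebra_simps)
  qed
  have c: "c = 2*x^2 - 2*e"
  proof -
    have "u^2+v^2+t^2 = (u+v+t)^2 - 2*e" unfolding e_def by (simp add: power2_eq_square algebra_simps)
    thus ?thesis using assms(5,6) by simp
  qed
  show ?thesis
  proof (cases "c = 4")
    case True
    hence "x^2 = 2 + e" using c by simp
    hence "e \<le> 1" using eup by simp
    hence "e^2 \<le> 1" using e0 by (simp add: power_le_one)
    thus ?thesis using e3 by simp
  next
    case False
    hence cc: "6 \<le> c" "c \<le> 25" using assms(8) by auto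
    have "e \<ge> 17/10"
    proof (rule ccontr)
      assume "\<not> ?thesis"
      hence "e^2 < (17/10)^2" using e0 by (intro power_strict_mono) auto
      thus False using e3 by (simp add: power2_eq_square)
    qed
    hence P: "(2*x)^2 \<ge> 2*c + 68/10" using c by (simp add: power2_eq_square algebra_simps)
    have "((20+c)/6)^2 \<le> 2*c+68/10"
    proof -
      have "(c-6)*(c-25) \<le> 0" using cc by (simp add: mult_nonneg_nonpos)
      hence "c*c - 31*c + 150 \<le> 0" by (simp add: algebra_simps)
      moreover have "((20+c)/6)^2 = (400 + 40*c + c*c)/36" by (simp add: power2_eq_square field_simps)
      moreover have "(400 + 40*c + c*c)/36 \<le> 2*c + 68/10" using cc \<open>c*c - 31*c + 150 \<le> 0\<close> by simp
      ultimately show ?thesis by simp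
    qed
    hence "((20+c)/6)^2 \<le> (2*x)^2" using P by linarith
    moreover have "2*x \<ge> 0" using assms(1) by simp
    ultimately show "(20+c)/6 \<le> 2*x" using power2_le_imp_le by blast
  qed
qed

lemma r12:
  fixes x u v c :: real
  assumes "x>0" "u>0" "v>0" "x = u+v" "x^2+u^2+v^2 = c"
    "x*u*v \<ge> 1" "c = 4 \<or> c = 6"
  shows "2*x \<ge> (12+c)/5"
proof -
  have uv: "u*v = x^2 - c/2"
  proof -
    have "u^2+v^2 = x^2 - 2*u*v" unfolding assms(4) by (simp add: power2_eq_square algebra_simps)
    thus ?thesis using assms(5) by simp
  qed
  have uv0: "u*v > 0" using assms by simp
  have k: "x*(x^2 - c/2) \<ge> 1" using assms(6) uv by (simp add: mult.assoc)
  show ?thesis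
  proof (rule ccontr)
    assume "\<not> ?thesis"
    hence xl: "x < (12+c)/10" by simp
    have pos: "x^2 - c/2 > 0" using uv uv0 by simp
    show False
    proof (cases "c = 4")
      case True
      hence "x < 8/5" using xl by simp
      hence "x^2 < (8/5)^2" using assms(1) by (intro power_strict_mono) auto
      hence "x^2 - c/2 < 14/25" using True by (simp add: power2_eq_square)
      hence "x*(x^2 - c/2) < (8/5)*(14/25)" using \<open>x < 8/5\<close> pos assms(1)
        by (intro mult_strict_mono) auto
      thus False using k by linarith
    next
      case False
      hence c6: "c = 6" using assms(7) by simp
      hence "x < 9/5" using xl by simp
      hence "x^2 < (9/5)^2" using assms(1) by (intro power_strict_mono) auto
      hence "x^2 - c/2 < 6/25" using c6 by (simp add: power2_eq_square)
      hence "x*(x^2 - c/2) < (9/5)*(6/25)" using \<open>x < 9/5\<close> pos assms(1)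
        by (intro mult_strict_mono) auto
      thus False using k by linarith
    qed
  qed
qed

lemma r3:
  fixes x y z c :: real
  assumes "x+y+z=0" "x^2+y^2+z^2=c" "\<bar>x*y*z\<bar> \<ge> 1" "c = 4 \<or> c = 6"
  shows "\<bar>x\<bar>+\<bar>y\<bar>+\<bar>z\<bar> \<ge> (12+c)/5"
proof -
  have k: "\<bar>a\<bar>+\<bar>b\<bar>+\<bar>d\<bar> \<ge> (12+c)/5" if "a>0" "b<0" "d<0" "a+b+d=0" "a^2+b^2+d^2=c"
     "\<bar>a*b*d\<bar> \<ge> 1" for a b d
  proof -
    have "2*a \<ge> (12+c)/5"
      using r12[of a "-b" "-d" c] that assms(4) by (simp add: abs_mult)
    thus ?thesis using that by simp
  qed
  have nz: "x \<noteq> 0" "y \<noteq> 0" "z \<noteq> 0" using assms(3) by auto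
  have sq: "(-a)^2 = (a::real)^2" for a by simp
  show ?thesis
    using k[of x y z] k[of y x z] k[of z x y] k[of "-x" "-y" "-z"] k[of "-y" "-x" "-z"] k[of "-z" "-x" "-y"]
      nz assms(1,2,3)
    by (smt (verit) mult.commute mult.left_commute abs_minus_cancel power2_minus mult_minus_left mult_minus_right)
qed

lemma r4:
  fixes x y z w c :: real
  assumes "x+y+z+w=0" "x^2+y^2+z^2+w^2=c" "\<bar>x*y*z*w\<bar> \<ge> 1" "c = 4 \<or> (6 \<le> c \<and> c \<le> 25)"
  shows "\<bar>x\<bar>+\<bar>y\<bar>+\<bar>z\<bar>+\<bar>w\<bar> \<ge> (20+c)/6"
proof -
  have k1: "\<bar>a\<bar>+\<bar>b\<bar>+\<bar>d\<bar>+\<bar>e\<bar> \<ge> (20+c)/6" if "a>0" "b<0" "d<0" "e<0" "a+b+d+e=0" "a^2+b^2+d^2+e^2=c"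
     "\<bar>a*b*d*e\<bar> \<ge> 1" for a b d e
  proof -
    have "2*a \<ge> (20+c)/6"
      using r13[of a "-b" "-d" "-e" c] that assms(4) by (simp add: abs_mult)
    thus ?thesis using that by simp
  qed
  have k2: "\<bar>a\<bar>+\<bar>b\<bar>+\<bar>d\<bar>+\<bar>e\<bar> \<ge> (20+c)/6" if "a>0" "b>0" "d<0" "e<0" "a+b+d+e=0" "a^2+b^2+d^2+e^2=c"
     "\<bar>a*b*d*e\<bar> \<ge> 1" for a b d e
  proof -
    have "a*b > 0" using that by simp
    moreover have "d*e > 0" using that by (simp add: mult_neg_neg)
    ultimately have "(a*b)*(d*e) > 0" by simp
    hence "a*b*d*e > 0" by (simp add: mult.assoc)
    hence "a*b*d*e \<ge> 1" using that(7) by simp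
    hence "a+b-d-e \<ge> (20+c)/6"
      using r22[of a b d e c] that assms(4) by linarith
    thus ?thesis using that by simp
  qed
  have nz: "x \<noteq> 0" "y \<noteq> 0" "z \<noteq> 0" "w \<noteq> 0" using assms(3) by auto
  have pat: "(x>0 \<and> y<0 \<and> z<0 \<and> w<0) \<or> (y>0 \<and> x<0 \<and> z<0 \<and> w<0) \<or> (z>0 \<and> x<0 \<and> y<0 \<and> w<0) \<or> (w>0 \<and> x<0 \<and> y<0 \<and> z<0)
    \<or> (x<0 \<and> y>0 \<and> z>0 \<and> w>0) \<or> (y<0 \<and> x>0 \<and> z>0 \<and> w>0) \<or> (z<0 \<and> x>0 \<and> y>0 \<and> w>0) \<or> (w<0 \<and> x>0 \<and> y>0 \<and> z>0)
    \<or> (x>0 \<and> y>0 \<and> z<0 \<and> w<0) \<or> (x>0 \<and> z>0 \<and> y<0 \<and> w<0) \<or> (x>0 \<and> w>0 \<and> y<0 \<and> z<0)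
    \<or> (y>0 \<and> z>0 \<and> x<0 \<and> w<0) \<or> (y>0 \<and> w>0 \<and> x<0 \<and> z<0) \<or> (z>0 \<and> w>0 \<and> x<0 \<and> y<0)"
    using nz assms(1) by (smt (verit))
  have k1n: "\<bar>a\<bar>+\<bar>b\<bar>+\<bar>d\<bar>+\<bar>e\<bar> \<ge> (20+c)/6" if "a<0" "b>0" "d>0" "e>0" "a+b+d+e=0" "a^2+b^2+d^2+e^2=c"
     "\<bar>a*b*d*e\<bar> \<ge> 1" for a b d e
    using k1[of "-a" "-b" "-d" "-e"] that by simp
  show ?thesis
    using pat
  proof (elim disjE)
    assume h: "x>0 \<and> y<0 \<and> z<0 \<and> w<0"
    have "\<bar>x\<bar>+\<bar>y\<bar>+\<bar>z\<bar>+\<bar>w\<bar> \<ge> (20+c)/6"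
      by (rule k1) (use h assms in \<open>simp_all add: ac_simps\<close>)
    thus ?thesis by linarith
  next
    assume h: "y>0 \<and> x<0 \<and> z<0 \<and> w<0"
    have "\<bar>y\<bar>+\<bar>x\<bar>+\<bar>z\<bar>+\<bar>w\<bar> \<ge> (20+c)/6"
      by (rule k1) (use h assms in \<open>simp_all add: ac_simps\<close>)
    thus ?thesis by linarith
  next
    assume h: "z>0 \<and> x<0 \<and> y<0 \<and> w<0"
    have "\<bar>z\<bar>+\<bar>x\<bar>+\<bar>y\<bar>+\<bar>w\<bar> \<ge> (20+c)/6"
      by (rule k1) (use h assms in \<open>simp_all add: ac_simps\<close>)
    thus ?thesis by linarith
  next
    assume h: "w>0 \<and> x<0 \<and> y<0 \<and> z<0"
    have "\<bar>w\<bar>+\<bar>x\<bar>+\<bar>y\<bar>+\<bar>z\<bar> \<ge> (20+c)/6"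
      by (rule k1) (use h assms in \<open>simp_all add: ac_simps\<close>)
    thus ?thesis by linarith
  next
    assume h: "x<0 \<and> y>0 \<and> z>0 \<and> w>0"
    have "\<bar>x\<bar>+\<bar>y\<bar>+\<bar>z\<bar>+\<bar>w\<bar> \<ge> (20+c)/6"
      by (rule k1n) (use h assms in \<open>simp_all add: ac_simps\<close>)
    thus ?thesis by linarith
  next
    assume h: "y<0 \<and> x>0 \<and> z>0 \<and> w>0"
    have "\<bar>y\<bar>+\<bar>x\<bar>+\<bar>z\<bar>+\<bar>w\<bar> \<ge> (20+c)/6"
      by (rule k1n) (use h assms in \<open>simp_all add: ac_simps\<close>)
    thus ?thesis by linarith
  next
    assume h: "z<0 \<and> x>0 \<and> y>0 \<and> w>0"
    have "\<bar>z\<bar>+\<bar>x\<bar>+\<bar>y\<bar>+\<bar>w\<bar> \<ge> (20+c)/6"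
      by (rule k1n) (use h assms in \<open>simp_all add: ac_simps\<close>)
    thus ?thesis by linarith
  next
    assume h: "w<0 \<and> x>0 \<and> y>0 \<and> z>0"
    have "\<bar>w\<bar>+\<bar>x\<bar>+\<bar>y\<bar>+\<bar>z\<bar> \<ge> (20+c)/6"
      by (rule k1n) (use h assms in \<open>simp_all add: ac_simps\<close>)
    thus ?thesis by linarith
  next
    assume h: "x>0 \<and> y>0 \<and> z<0 \<and> w<0"
    have "\<bar>x\<bar>+\<bar>y\<bar>+\<bar>z\<bar>+\<bar>w\<bar> \<ge> (20+c)/6"
      by (rule k2) (use h assms in \<open>simp_all add: ac_simps\<close>)
    thus ?thesis by linarith
  next
    assume h: "x>0 \<and> z>0 \<and> y<0 \<and> w<0"
    have "\<bar>x\<bar>+\<bar>z\<bar>+\<bar>y\<bar>+\<bar>w\<bar> \<ge> (20+c)/6"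
      by (rule k2) (use h assms in \<open>simp_all add: ac_simps\<close>)
    thus ?thesis by linarith
  next
    assume h: "x>0 \<and> w>0 \<and> y<0 \<and> z<0"
    have "\<bar>x\<bar>+\<bar>w\<bar>+\<bar>y\<bar>+\<bar>z\<bar> \<ge> (20+c)/6"
      by (rule k2) (use h assms in \<open>simp_all add: ac_simps\<close>)
    thus ?thesis by linarith
  next
    assume h: "y>0 \<and> z>0 \<and> x<0 \<and> w<0"
    have "\<bar>y\<bar>+\<bar>z\<bar>+\<bar>x\<bar>+\<bar>w\<bar> \<ge> (20+c)/6"
      by (rule k2) (use h assms in \<open>simp_all add: ac_simps\<close>)
    thus ?thesis by linarith
  next
    assume h: "y>0 \<and> w>0 \<and> x<0 \<and> z<0"
    have "\<bar>y\<bar>+\<bar>w\<bar>+\<bar>x\<bar>+\<bar>z\<bar> \<ge> (20+c)/6"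
      by (rule k2) (use h assms in \<open>simp_all add: ac_simps\<close>)
    thus ?thesis by linarith
  next
    assume h: "z>0 \<and> w>0 \<and> x<0 \<and> y<0"
    have "\<bar>z\<bar>+\<bar>w\<bar>+\<bar>x\<bar>+\<bar>y\<bar> \<ge> (20+c)/6"
      by (rule k2) (use h assms in \<open>simp_all add: ac_simps\<close>)
    thus ?thesis by linarith
  qed
qed

definition tr :: "'a::comm_ring_1 mat \<Rightarrow> 'a" where "tr M = (\<Sum>i<dim_row M. M $$ (i,i))"

lemma tr_mult_expand:
  assumes "A \<in> carrier_mat n n" "B \<in> carrier_mat n n"
  shows "tr (A*B) = (\<Sum>i<n. \<Sum>k<n. A$$(i,k) * B$$(k,i))"
  using assms unfolding tr_def by (auto simp: scalar_prod_def atLeast0LessThan intro!: sum.cong)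

lemma tr_mult_comm:
  assumes "A \<in> carrier_mat n n" "B \<in> carrier_mat n n"
  shows "tr (A*B) = tr (B*A)"
proof -
  have "tr (A*B) = (\<Sum>i<n. \<Sum>k<n. A$$(i,k) * B$$(k,i))" by (rule tr_mult_expand[OF assms])
  also have "\<dots> = (\<Sum>k<n. \<Sum>i<n. B$$(k,i) * A$$(i,k))" by (subst sum.swap) (simp add: mult.commute)
  also have "\<dots> = tr (B*A)" by (rule tr_mult_expand[OF assms(2,1), symmetric])
  finally show ?thesis .
qed

lemma tr_similar:
  assumes A: "A \<in> carrier_mat n n" and w: "similar_mat_wit A B P Q"
  shows "tr A = tr B"
proof -
  note d = similar_mat_witD2[OF A w]
  have "tr A = tr ((P*B)*Q)" using d(3) by simp
  also have "\<dots> = tr (Q*(P*B))" by (rule tr_mult_comm[of _ n]) (use d(5-7) in auto)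
  also have "Q*(P*B) = (Q*P)*B" using d(5-7) by simp
  also have "\<dots> = B" using d(2,5) by simp
  finally show ?thesis .
qed

lemma sq_similar:
  assumes A: "A \<in> carrier_mat n n" and w: "similar_mat_wit A B P Q"
  shows "similar_mat_wit (A*A) (B*B) P Q"
proof -
  have "similar_mat_wit (A ^\<^sub>m 2) (B ^\<^sub>m 2) P Q" by (rule similar_mat_wit_pow[OF w])
  moreover have "A ^\<^sub>m 2 = A * A" using A by (simp add: numeral_2_eq_2)
  moreover have "B ^\<^sub>m 2 = B * B" using similar_mat_witD2[OF A w] by (simp add: numeral_2_eq_2)
  ultimately show ?thesis by simp
qed

lemma tr_upper_sq:
  assumes B: "B \<in> carrier_mat n n" and ut: "upper_triangular B"
  shows "tr (B*B) = (\<Sum>i<n. (B$$(i,i))^2)"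
proof -
  have "tr (B*B) = (\<Sum>i<n. \<Sum>k<n. B$$(i,k) * B$$(k,i))" by (rule tr_mult_expand[OF B B])
  also have "\<dots> = (\<Sum>i<n. (B$$(i,i))^2)"
  proof (rule sum.cong[OF refl])
    fix i assume i: "i \<in> {..<n}"
    have "(\<Sum>k<n. B$$(i,k) * B$$(k,i)) = (\<Sum>k\<in>{i}. B$$(i,k) * B$$(k,i))"
    proof (rule sum.mono_neutral_right)
      show "\<forall>k\<in>{..<n} - {i}. B$$(i,k) * B$$(k,i) = 0"
      proof
        fix k assume k: "k \<in> {..<n} - {i}"
        show "B$$(i,k) * B$$(k,i) = 0"
        proof (cases "k < i")
          case True thus ?thesis using ut B i unfolding upper_triangular_def by auto
        next
          case False hence "i < k" using k by auto
          thus ?thesis using ut B k unfolding upper_triangular_def by auto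
        qed
      qed
    qed (use i in simp_all)
    thus "(\<Sum>k<n. B$$(i,k) * B$$(k,i)) = (B$$(i,i))^2" by (simp add: power2_eq_square)
  qed
  finally show ?thesis .
qed

lemma proots_linear_prod:
  "proots (\<Prod>e\<leftarrow>es. [:- e, 1:]) = mset (es :: complex list)"
proof (induction es)
  case Nil thus ?case by simp
next
  case (Cons e es)
  have nz: "(\<Prod>e\<leftarrow>es. [:- e, 1:]) \<noteq> 0" by (auto simp: prod_list_zero_iff)
  have "proots ([:- e, 1:] * (\<Prod>e\<leftarrow>es. [:- e, 1:])) = proots [:- e, 1:] + proots (\<Prod>e\<leftarrow>es. [:- e, 1:])"
    using nz by (intro proots_mult) auto
  moreover have "proots [:- e, 1:] = {#e#}" using proots_linear_factor[of "-e"] by simp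
  ultimately show ?case using Cons by simp
qed

lemma sum_upt_list: "(\<Sum>i<n. f i) = sum_list (map f [0..<n])"
  by (simp add: sum_set_upt_conv_sum_list_nat[symmetric] atLeast0LessThan)

lemma sg_irr: "simple_graph n E \<Longrightarrow> \<not> E i i" unfolding simple_graph_def by blast
lemma sg_sym: "simple_graph n E \<Longrightarrow> E i j \<Longrightarrow> E j i" unfolding simple_graph_def by blast
lemma sg_lt: "simple_graph n E \<Longrightarrow> E i j \<Longrightarrow> i < n \<and> j < n" unfolding simple_graph_def by blast

lemma pairs_eq: "simple_graph a E \<Longrightarrow> {(i,k). E i k} = Sigma {..<a} (\<lambda>i. {k\<in>{..<a}. E i k})"
  unfolding simple_graph_def by auto

lemma count_sum:
  assumes "simple_graph a E"
  shows "(\<Sum>i<a. \<Sum>k<a. (if E i k then 1 else 0)::'b::semiring_1) = of_nat (card {(i,k). E i k})"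
proof -
  have "card {(i,k). E i k} = (\<Sum>i<a. card {k\<in>{..<a}. E i k})"
    unfolding pairs_eq[OF assms] by (rule card_SigmaI) auto
  moreover have "(\<Sum>k<a. (if E i k then 1 else 0)::'b) = of_nat (card {k\<in>{..<a}. E i k})" for i
    by (simp add: sum.inter_filter[symmetric])
  ultimately show ?thesis by simp
qed

lemma eig_real:
  fixes A :: "real mat"
  assumes A: "A \<in> carrier_mat n n" and sym: "\<And>i j. i<n \<Longrightarrow> j<n \<Longrightarrow> A$$(i,j) = A$$(j,i)"
    and ev: "eigenvalue (map_mat complex_of_real A) e"
  shows "Im e = 0"
proof -
  let ?C = "map_mat complex_of_real A"
  obtain v where v: "v \<in> carrier_vec n" "v \<noteq> 0\<^sub>v n" "?C *\<^sub>v v = e \<cdot>\<^sub>v v"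
    using ev A unfolding eigenvalue_def eigenvector_def by auto
  have comp: "(\<Sum>j<n. complex_of_real (A$$(i,j)) * v$j) = e * v$i" if i: "i<n" for i
  proof -
    have "(?C *\<^sub>v v) $ i = e * v$i" using v(1,3) i by simp
    moreover have "(?C *\<^sub>v v) $ i = (\<Sum>j<n. complex_of_real (A$$(i,j)) * v$j)"
      using A v(1) i by (auto simp: scalar_prod_def atLeast0LessThan intro!: sum.cong)
    ultimately show ?thesis by simp
  qed
  define s where "s = (\<Sum>i<n. cnj (v$i) * (\<Sum>j<n. complex_of_real (A$$(i,j)) * v$j))"
  define N where "N = (\<Sum>i<n. (cmod (v$i))^2)"
  have s1: "s = e * complex_of_real N"
  proof -
    have "s = (\<Sum>i<n. cnj (v$i) * (e * v$i))" unfolding s_def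
      by (intro sum.cong refl) (simp add: comp)
    also have "\<dots> = (\<Sum>i<n. e * (v$i * cnj (v$i)))" by (simp add: ac_simps)
    also have "\<dots> = e * (\<Sum>i<n. v$i * cnj (v$i))" by (simp add: sum_distrib_left)
    also have "(\<Sum>i<n. v$i * cnj (v$i)) = complex_of_real N" unfolding N_def
      by (simp only: of_real_sum complex_norm_square)
    finally show ?thesis .
  qed
  have s2: "cnj s = s"
  proof -
    have "cnj s = (\<Sum>i<n. \<Sum>j<n. v$i * complex_of_real (A$$(i,j)) * cnj (v$j))"
      unfolding s_def by (simp add: cnj_sum sum_distrib_left ac_simps)
    also have "\<dots> = (\<Sum>j<n. \<Sum>i<n. v$i * complex_of_real (A$$(i,j)) * cnj (v$j))" by (rule sum.swap)
    also have "\<dots> = s" unfolding s_def sum_distrib_left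
      by (intro sum.cong refl) (simp add: sym ac_simps)
    finally show ?thesis .
  qed
  obtain i where i: "i < n" "v$i \<noteq> 0" using v(1,2) by (metis vec_eq_iff carrier_vecD index_zero_vec)
  have "N \<ge> (cmod (v$i))^2" unfolding N_def using i(1) by (intro member_le_sum) auto
  moreover have "(cmod (v$i))^2 > 0" using i(2) by simp
  ultimately have N0: "N > 0" by linarith
  have "Im (cnj s) = Im s" using s2 by simp
  hence "Im s = 0" by simp
  hence "Im e * N = 0" using s1 by simp
  thus ?thesis using N0 by simp
qed

lemma spec:
  assumes sg: "simple_graph a E"
  obtains es where "length es = a"
    "energy a E = sum_list (map cmod es)"
    "sum_list es = 0"
    "sum_list (map (\<lambda>e. e^2) es) = of_nat (card {(i,j). E i j})"
    "prod_list es = complex_of_real (det (adj_matrix a E))"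
    "\<forall>e\<in>set es. Im e = 0"
proof -
  let ?A = "adj_matrix a E"
  let ?C = "map_mat complex_of_real ?A"
  have Ac: "?A \<in> carrier_mat a a" by (simp add: adj_matrix_def)
  have C: "?C \<in> carrier_mat a a" by (simp add: adj_matrix_def)
  have Cij: "?C $$ (i,j) = (if E i j then 1 else 0)" if "i<a" "j<a" for i j
    using that by (simp add: adj_matrix_def)
  obtain es where cp: "char_poly ?C = (\<Prod>e\<leftarrow>es. [:-e,1:])" and len: "length es = a"
    using char_poly_factorized[OF C] by blast
  obtain B P Q where sd: "schur_decomposition ?C es = (B,P,Q)" by (cases "schur_decomposition ?C es") auto
  from schur_decomposition[OF C cp sd] have w: "similar_mat_wit ?C B P Q"
    and ut: "upper_triangular B" and dg: "diag_mat B = es" by auto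
  note d = similar_mat_witD2[OF C w]
  have Bc: "B \<in> carrier_mat a a" using d by auto
  have sumB: "sum_list (map f es) = (\<Sum>i<a. f (B$$(i,i)))" for f :: "complex \<Rightarrow> complex"
  proof -
    have dB: "dim_row B = a" using Bc by simp
    have "sum_list (map f es) = sum_list (map (\<lambda>i. f (B$$(i,i))) [0..<a])"
      unfolding dg[symmetric] diag_mat_def dB by (simp only: map_map comp_def)
    also have "\<dots> = (\<Sum>i<a. f (B$$(i,i)))" by (rule sum_upt_list[symmetric])
    finally show ?thesis .
  qed
  have en: "energy a E = sum_list (map cmod es)"
    unfolding energy_def cp proots_linear_prod by (simp only: mset_map[symmetric] sum_mset_sum_list)
  have s0: "sum_list es = 0"
  proof -
    have "sum_list es = sum_list (map (\<lambda>x. x) es)" by simp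
    also have "\<dots> = tr B" unfolding sumB tr_def using Bc by simp
    also have "\<dots> = tr ?C" using tr_similar[OF C w] by simp
    also have "\<dots> = (\<Sum>i<a. ?C $$ (i,i))" unfolding tr_def using C by simp
    also have "\<dots> = 0" by (intro sum.neutral ballI) (simp add: Cij sg_irr[OF sg])
    finally show ?thesis .
  qed
  have s2: "sum_list (map (\<lambda>e. e^2) es) = of_nat (card {(i,j). E i j})"
  proof -
    have "sum_list (map (\<lambda>e. e^2) es) = tr (B*B)" unfolding sumB tr_upper_sq[OF Bc ut] ..
    also have "\<dots> = tr (?C * ?C)" using tr_similar[OF _ sq_similar[OF C w], of a] C by simp
    also have "\<dots> = (\<Sum>i<a. \<Sum>k<a. ?C$$(i,k) * ?C$$(k,i))" by (rule tr_mult_expand[OF C C])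
    also have "\<dots> = (\<Sum>i<a. \<Sum>k<a. (if E i k then 1 else 0))"
      by (intro sum.cong refl) (auto simp: Cij dest: sg_sym[OF sg])
    also have "\<dots> = of_nat (card {(i,j). E i j})" by (rule count_sum[OF sg])
    finally show ?thesis .
  qed
  have pr: "prod_list es = complex_of_real (det ?A)"
  proof -
    have "prod_list es = det B" using det_upper_triangular[OF ut Bc] dg by simp
    also have "\<dots> = det ?C" using det_similar[of ?C B] w unfolding similar_mat_def by metis
    also have "\<dots> = complex_of_real (det ?A)" by simp
    finally show ?thesis .
  qed
  have re: "\<forall>e\<in>set es. Im e = 0"
  proof
    fix e assume e: "e \<in> set es"
    have "poly (char_poly ?C) e = 0" unfolding cp using e
      by (auto simp: poly_prod_list prod_list_zero_iff)
    hence ev: "eigenvalue ?C e" using eigenvalue_root_char_poly[OF C] by simp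
    have symA: "\<And>i j. i<a \<Longrightarrow> j<a \<Longrightarrow> ?A$$(i,j) = ?A$$(j,i)"
      by (auto simp: adj_matrix_def dest: sg_sym[OF sg])
    show "Im e = 0" by (rule eig_real[OF Ac symA ev])
  qed
  show ?thesis using that len en s0 s2 pr re by blast
qed

lemma pairs_finite: "simple_graph n E \<Longrightarrow> finite {(i,j). E i j}"
  by (rule finite_subset[of _ "{..<n} \<times> {..<n}"]) (auto dest: sg_lt)

lemma card_pairs:
  assumes sg: "simple_graph n E"
  shows "card {(i,j). E i j} = 2 * num_edges n E"
proof -
  define L where "L = {(i,j). i<j \<and> j<n \<and> E i j}"
  have fL: "finite L" unfolding L_def by (rule finite_subset[of _ "{..<n} \<times> {..<n}"]) auto
  have eq: "{(i,j). E i j} = L \<union> prod.swap ` L"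
  proof (intro equalityI subsetI)
    fix p assume "p \<in> {(i,j). E i j}"
    then obtain i j where p: "p = (i,j)" and e: "E i j" by auto
    have "i \<noteq> j" using e sg_irr[OF sg] by auto
    then consider "i < j" | "j < i" by linarith
    thus "p \<in> L \<union> prod.swap ` L"
    proof cases
      case 1 thus ?thesis using e sg_lt[OF sg e] p unfolding L_def by auto
    next
      case 2
      have "(j,i) \<in> L" using 2 sg_sym[OF sg e] sg_lt[OF sg e] unfolding L_def by auto
      hence "prod.swap (j,i) \<in> prod.swap ` L" by (rule imageI)
      thus ?thesis using p by simp
    qed
  next
    fix p assume "p \<in> L \<union> prod.swap ` L"
    thus "p \<in> {(i,j). E i j}" unfolding L_def by (auto dest: sg_sym[OF sg])
  qed
  have disj: "L \<inter> prod.swap ` L = {}" unfolding L_def by auto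
  have "card {(i,j). E i j} = card L + card (prod.swap ` L)"
    unfolding eq using fL disj by (intro card_Un_disjoint) auto
  also have "card (prod.swap ` L) = card L" by (rule card_image) (auto simp: inj_on_def)
  also have "card L = num_edges n E" unfolding L_def num_edges_def ..
  finally show ?thesis by simp
qed

lemma pairs_le:
  assumes sg: "simple_graph n E"
  shows "card {(i,j). E i j} \<le> n*n - n"
proof -
  have sub: "{(i,j). E i j} \<subseteq> ({..<n} \<times> {..<n}) - (\<lambda>i. (i,i)) ` {..<n}"
    using sg_irr[OF sg] by (auto dest: sg_lt[OF sg])
  have "card (({..<n} \<times> {..<n}) - (\<lambda>i. (i,i)) ` {..<n}) = n*n - n"
  proof -
    have inj: "inj_on (\<lambda>i::nat. (i,i)) {..<n}" by (rule inj_onI) simp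
    have c1: "card ((\<lambda>i. (i,i)) ` {..<n}) = n" using card_image[OF inj] by simp
    have sb: "(\<lambda>i. (i,i)) ` {..<n} \<subseteq> {..<n} \<times> {..<n}" by auto
    have fin: "finite ((\<lambda>i::nat. (i,i)) ` {..<n})" by simp
    have "card (({..<n} \<times> {..<n}) - (\<lambda>i. (i,i)) ` {..<n}) = card ({..<n} \<times> {..<n}) - card ((\<lambda>i. (i,i)) ` {..<n})"
      by (rule card_Diff_subset[OF fin sb])
    also have "\<dots> = n*n - n" using c1 by (simp add: card_cartesian_product)
    finally show ?thesis .
  qed
  moreover have "finite (({..<n} \<times> {..<n}) - (\<lambda>i. (i,i)) ` {..<n})" by simp
  ultimately show ?thesis using card_mono[OF _ sub] by simp
qed

lemma no_iso:
  assumes sg: "simple_graph n E" and d: "det (adj_matrix n E) \<noteq> 0" and i: "i < n"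
  shows "\<exists>j. E i j"
proof (rule ccontr)
  assume "\<not> ?thesis"
  hence ni: "\<And>j. \<not> E j i" using sg_sym[OF sg] by blast
  let ?A = "adj_matrix n E"
  have Ac: "?A \<in> carrier_mat n n" by (simp add: adj_matrix_def)
  have "?A *\<^sub>v unit_vec n i = 0\<^sub>v n"
  proof (rule eq_vecI)
    fix k assume k: "k < dim_vec (0\<^sub>v n :: real vec)"
    hence k': "k < n" by simp
    have "(?A *\<^sub>v unit_vec n i) $ k = row ?A k \<bullet> unit_vec n i" using k' Ac by simp
    also have "\<dots> = row ?A k $ i" using i by (rule scalar_prod_right_unit)
    also have "\<dots> = 0" using k' i ni by (simp add: adj_matrix_def)
    finally show "(?A *\<^sub>v unit_vec n i) $ k = 0\<^sub>v n $ k" using k' by simp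
  qed (simp add: adj_matrix_def)
  moreover have "unit_vec n i \<noteq> (0\<^sub>v n :: real vec)"
  proof
    assume "unit_vec n i = (0\<^sub>v n :: real vec)"
    hence "unit_vec n i $ i = (0\<^sub>v n :: real vec) $ i" by simp
    thus False using i by simp
  qed
  ultimately have "det ?A = 0" unfolding det_0_iff_vec_prod_zero[OF Ac] by (intro exI[of _ "unit_vec n i"]) simp
  thus False using d by simp
qed

lemma pairs_ge:
  assumes sg: "simple_graph n E" and d: "det (adj_matrix n E) \<noteq> 0"
  shows "n \<le> card {(i,j). E i j}"
proof -
  define f where "f i = (i, SOME j. E i j)" for i
  have "f ` {..<n} \<subseteq> {(i,j). E i j}"
    unfolding f_def using no_iso[OF sg d] by (auto intro: someI_ex)
  moreover have "inj_on f {..<n}" unfolding f_def by (auto simp: inj_on_def)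
  ultimately have "card {..<n} \<le> card {(i,j). E i j}"
    using card_inj_on_le pairs_finite[OF sg] by (metis card_image card_mono)
  thus ?thesis by simp
qed

lemma det_int:
  assumes d: "det (adj_matrix n E) \<noteq> 0"
  shows "\<bar>det (adj_matrix n E)\<bar> \<ge> 1"
proof -
  define M where "M = mat n n (\<lambda>(i,j). if E i j then 1 else (0::int))"
  have "adj_matrix n E = of_int_hom.mat_hom M"
    unfolding M_def adj_matrix_def by (rule eq_matI) auto
  hence e: "det (adj_matrix n E) = of_int (det M)" by simp
  hence "det M \<noteq> 0" using d by auto
  hence "\<bar>det M\<bar> \<ge> 1" by linarith
  thus ?thesis unfolding e by (metis of_int_1_le_iff of_int_abs)
qed

lemma ofr_sum_list: "complex_of_real (sum_list xs) = sum_list (map complex_of_real xs)"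
  by (induction xs) auto
lemma ofr_prod_list: "complex_of_real (prod_list xs) = prod_list (map complex_of_real xs)"
  by (induction xs) auto

lemma real_spec:
  assumes sg: "simple_graph a E"
  obtains rs where "length rs = a"
    "energy a E = sum_list (map abs rs)"
    "sum_list rs = 0"
    "sum_list (map (\<lambda>x. x^2) rs) = real (card {(i,j). E i j})"
    "prod_list rs = det (adj_matrix a E)"
proof -
  obtain es where es: "length es = a"
    "energy a E = sum_list (map cmod es)"
    "sum_list es = 0"
    "sum_list (map (\<lambda>e. e^2) es) = of_nat (card {(i,j). E i j})"
    "prod_list es = complex_of_real (det (adj_matrix a E))"
    "\<forall>e\<in>set es. Im e = 0"
    using spec[OF sg] by blast
  define rs where "rs = map Re es"
  have esr: "es = map complex_of_real rs" unfolding rs_def using es(6)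
    by (induction es) (auto simp: complex_eq_iff)
  have "length rs = a" unfolding rs_def using es(1) by simp
  moreover have "energy a E = sum_list (map abs rs)"
  proof -
    have "map cmod es = map abs rs" unfolding esr by (induction rs) auto
    thus ?thesis using es(2) by simp
  qed
  moreover have "sum_list rs = 0"
  proof -
    have "sum_list (map complex_of_real rs) = 0" using es(3) unfolding esr .
    hence "complex_of_real (sum_list rs) = 0" by (simp only: ofr_sum_list)
    thus ?thesis by simp
  qed
  moreover have "sum_list (map (\<lambda>x. x^2) rs) = real (card {(i,j). E i j})"
  proof -
    have "map (\<lambda>e. e^2) es = map complex_of_real (map (\<lambda>x. x^2) rs)" unfolding esr by (induction rs) auto
    hence "sum_list (map complex_of_real (map (\<lambda>x. x^2) rs)) = of_nat (card {(i,j). E i j})"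
      using es(4) by simp
    hence "complex_of_real (sum_list (map (\<lambda>x. x^2) rs)) = of_nat (card {(i,j). E i j})"
      by (simp only: ofr_sum_list)
    thus ?thesis by (metis of_real_eq_iff of_real_of_nat_eq)
  qed
  moreover have "prod_list rs = det (adj_matrix a E)"
  proof -
    have "prod_list (map complex_of_real rs) = complex_of_real (det (adj_matrix a E))"
      using es(5) unfolding esr .
    hence "complex_of_real (prod_list rs) = complex_of_real (det (adj_matrix a E))"
      by (simp only: ofr_prod_list)
    thus ?thesis by simp
  qed
  ultimately show ?thesis using that by blast
qed

lemma small:
  assumes sg: "simple_graph a E" and d: "det (adj_matrix a E) \<noteq> 0"
    and a: "2 \<le> a" "a \<le> 4" and n: "5 \<le> n" "a + 2 \<le> n"
  shows "energy a E \<ge> real a + (real (card {(i,j). E i j}) - real a) / real n"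
proof -
  define c where "c = card {(i,j). E i j}"
  obtain m where cm: "c = 2*m" using card_pairs[OF sg] unfolding c_def by blast
  have cge: "a \<le> c" using pairs_ge[OF sg d] unfolding c_def .
  have cle: "c \<le> a*a - a" using pairs_le[OF sg] unfolding c_def .
  have dt: "\<bar>det (adj_matrix a E)\<bar> \<ge> 1" by (rule det_int[OF d])
  obtain rs where rs: "length rs = a" "energy a E = sum_list (map abs rs)" "sum_list rs = 0"
    "sum_list (map (\<lambda>x. x^2) rs) = real c" "prod_list rs = det (adj_matrix a E)"
    using real_spec[OF sg] unfolding c_def by blast
  have n0: "real n > 0" using n by simp
  consider "a = 2" | "a = 3" | "a = 4" using a by linarith
  thus ?thesis
  proof cases
    case 1
    then obtain x y where xy: "rs = [x,y]" using rs(1) by (auto simp: length_Suc_conv numeral_2_eq_2)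
    have c2: "c = 2" using cge cle 1 by simp
    have "y = -x" using rs(3) xy by simp
    hence "2*x^2 = 2" using rs(4) xy c2 by simp
    hence "x^2 = 1" by simp
    hence "\<bar>x\<bar> = 1" by (metis abs_power2 power2_eq_1_iff abs_1 abs_minus_cancel)
    hence "energy a E = 2" using rs(2) xy \<open>y = -x\<close> by simp
    thus ?thesis using 1 c2 unfolding c_def by simp
  next
    case 2
    then obtain x y z where xy: "rs = [x,y,z]" using rs(1) by (auto simp: length_Suc_conv numeral_3_eq_3)
    have "m = 2 \<or> m = 3" using cge cle 2 cm by simp presburger
    hence c46: "real c = 4 \<or> real c = 6" using cm by auto
    have "\<bar>x\<bar>+\<bar>y\<bar>+\<bar>z\<bar> \<ge> (12 + real c)/5"
      by (rule r3) (use rs xy dt c46 in \<open>simp_all add: algebra_simps\<close>)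
    hence e: "energy a E \<ge> (12 + real c)/5" using rs(2) xy by simp
    have "(real c - 3)/real n \<le> (real c - 3)/5" using cge 2 n by (intro divide_left_mono) auto
    moreover have "(12 + real c)/5 = 3 + (real c - 3)/5" by (simp add: field_simps)
    ultimately have "energy a E \<ge> 3 + (real c - 3)/real n" using e by linarith
    thus ?thesis using 2 unfolding c_def[symmetric] by simp
  next
    case 3
    then obtain x y z w where xy: "rs = [x,y,z,w]" using rs(1) by (auto simp: length_Suc_conv eval_nat_numeral)
    have "2 \<le> m" "m \<le> 6" using cge cle 3 cm by simp_all
    hence c46: "real c = 4 \<or> (6 \<le> real c \<and> real c \<le> 25)" using cm by auto
    have "\<bar>x\<bar>+\<bar>y\<bar>+\<bar>z\<bar>+\<bar>w\<bar> \<ge> (20 + real c)/6"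
      by (rule r4) (use rs xy dt c46 in \<open>simp_all add: algebra_simps\<close>)
    hence e: "energy a E \<ge> (20 + real c)/6" using rs(2) xy by simp
    have "(real c - 4)/real n \<le> (real c - 4)/6" using cge 3 n by (intro divide_left_mono) auto
    moreover have "(20 + real c)/6 = 4 + (real c - 4)/6" by (simp add: field_simps)
    ultimately have "energy a E \<ge> 4 + (real c - 4)/real n" using e by linarith
    thus ?thesis using 3 unfolding c_def[symmetric] by simp
  qed
qed

definition pmat :: "nat \<Rightarrow> (nat \<Rightarrow> nat) \<Rightarrow> 'a mat \<Rightarrow> 'a mat" where
  "pmat n p M = mat n n (\<lambda>(i,j). M $$ (p i, p j))"

lemma det_pmat:
  fixes M :: "'a::comm_ring_1 mat"
  assumes M: "M \<in> carrier_mat n n" and p: "p permutes {0..<n}"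
  shows "det (pmat n p M) = det M"
proof -
  have pl: "p i < n" if "i < n" for i using p that by (simp add: permutes_in_image)
  define M1 where "M1 = mat n n (\<lambda>(i,j). M $$ (p i, j))"
  have d1: "det M1 = signof p * det M" unfolding M1_def by (rule det_permute_rows[OF M p])
  define T where "T = transpose_mat M1"
  have Tc: "T \<in> carrier_mat n n" unfolding T_def M1_def by simp
  define M2 where "M2 = mat n n (\<lambda>(i,j). T $$ (p i, j))"
  have d2: "det M2 = signof p * det T" unfolding M2_def by (rule det_permute_rows[OF Tc p])
  have dT: "det T = det M1" unfolding T_def by (rule det_transpose[of _ n]) (simp add: M1_def)
  have eq: "pmat n p M = transpose_mat M2"
    by (rule eq_matI) (auto simp: pmat_def M2_def T_def M1_def pl)
  have "det (pmat n p M) = det M2" unfolding eq by (rule det_transpose[of _ n]) (simp add: M2_def)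
  also have "\<dots> = (signof p * signof p) * det M" using d1 d2 dT by (simp add: mult.assoc)
  also have "signof p * signof p = (1::'a)" using signof_pm_one[of p] by (metis insertE empty_iff mult_1 mult_minus1_right minus_minus)
  finally show ?thesis by simp
qed

lemma relabel:
  assumes p: "p permutes {0..<n}" and sg: "simple_graph n E"
  shows "simple_graph n (\<lambda>i j. E (p i) (p j))"
    "energy n (\<lambda>i j. E (p i) (p j)) = energy n E"
    "det (adj_matrix n (\<lambda>i j. E (p i) (p j))) = det (adj_matrix n E)"
    "card {(i,j). E (p i) (p j)} = card {(i,j). E i j}"
proof -
  let ?E' = "\<lambda>i j. E (p i) (p j)"
  have pl: "p i < n \<longleftrightarrow> i < n" for i
  proof
    assume "i < n" thus "p i < n" using p by (simp add: permutes_in_image)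
  next
    assume "p i < n"
    show "i < n"
    proof (rule ccontr)
      assume "\<not> i < n"
      hence "p i = i" using p by (intro permutes_others[OF p]) simp
      thus False using \<open>p i < n\<close> \<open>\<not> i < n\<close> by simp
    qed
  qed
  have inj: "inj p" using p by (rule permutes_inj)
  show "simple_graph n ?E'"
    unfolding simple_graph_def
  proof (intro allI impI conjI)
    fix i j assume e: "E (p i) (p j)"
    show "i < n" using sg_lt[OF sg e] pl by blast
    show "j < n" using sg_lt[OF sg e] pl by blast
    show "i \<noteq> j" using e sg_irr[OF sg] by auto
    show "E (p j) (p i)" using sg_sym[OF sg e] .
  qed
  have adj: "adj_matrix n ?E' = pmat n p (adj_matrix n E)"
    by (rule eq_matI) (auto simp: pmat_def adj_matrix_def pl)
  show "det (adj_matrix n ?E') = det (adj_matrix n E)"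
    unfolding adj by (rule det_pmat[OF _ p]) (simp add: adj_matrix_def)
  let ?C = "map_mat complex_of_real (adj_matrix n E)"
  have C: "?C \<in> carrier_mat n n" by (simp add: adj_matrix_def)
  have Cp: "map_mat complex_of_real (adj_matrix n ?E') = pmat n p ?C"
    unfolding adj by (rule eq_matI) (auto simp: pmat_def adj_matrix_def pl)
  have cpm: "char_poly_matrix (pmat n p ?C) = pmat n p (char_poly_matrix ?C)"
    by (rule eq_matI) (auto simp: pmat_def char_poly_matrix_def pl inj_eq[OF inj] adj_matrix_def)
  have "char_poly (map_mat complex_of_real (adj_matrix n ?E')) = char_poly ?C"
    unfolding Cp char_poly_def cpm by (rule det_pmat[OF _ p]) (rule char_poly_matrix_closed[OF C])
  thus "energy n ?E' = energy n E" unfolding energy_def by simp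
  have "{(i,j). ?E' i j} = map_prod p p -` {(i,j). E i j}" by auto
  moreover have "inj (map_prod p p)" using inj unfolding inj_def by auto
  moreover have "{(i,j). E i j} \<subseteq> range (map_prod p p)"
  proof -
    have "surj p" using p by (rule permutes_surj)
    hence "surj (map_prod p p)" by (metis map_prod_surj)
    thus ?thesis by simp
  qed
  ultimately show "card {(i,j). ?E' i j} = card {(i,j). E i j}" by (metis card_vimage_inj)
qed

lemma cp_nz:
  assumes "(A :: complex mat) \<in> carrier_mat n n" shows "char_poly A \<noteq> 0"
proof
  assume "char_poly A = 0"
  hence "coeff (char_poly A) n = 0" by simp
  thus False using degree_monic_char_poly[OF assms] by simp
qed

lemma block:
  assumes sg: "simple_graph n E" and a: "a \<le> n" and noc: "\<And>i j. i < a \<Longrightarrow> a \<le> j \<Longrightarrow> \<not> E i j"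
  shows "simple_graph a (\<lambda>i j. i < a \<and> j < a \<and> E i j)" "simple_graph (n-a) (\<lambda>i j. E (i+a) (j+a))"
    "det (adj_matrix n E) = det (adj_matrix a (\<lambda>i j. i < a \<and> j < a \<and> E i j)) * det (adj_matrix (n-a) (\<lambda>i j. E (i+a) (j+a)))"
    "energy n E = energy a (\<lambda>i j. i < a \<and> j < a \<and> E i j) + energy (n-a) (\<lambda>i j. E (i+a) (j+a))"
    "card {(i,j). E i j} = card {(i,j). i < a \<and> j < a \<and> E i j} + card {(i,j). E (i+a) (j+a)}"
proof -
  define E1 where "E1 = (\<lambda>i j. i < a \<and> j < a \<and> E i j)"
  define E2 where "E2 = (\<lambda>i j. E (i+a) (j+a))"
  define b where "b = n - a"
  have nab: "n = a + b" unfolding b_def using a by simp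
  have noc': "\<not> E j i" if "i < a" "a \<le> j" for i j using noc[OF that] sg_sym[OF sg] by blast
  show s1: "simple_graph a (\<lambda>i j. i < a \<and> j < a \<and> E i j)"
    unfolding simple_graph_def using sg_irr[OF sg] sg_sym[OF sg] by blast
  show s2: "simple_graph (n-a) (\<lambda>i j. E (i+a) (j+a))"
    unfolding simple_graph_def using sg_irr[OF sg] sg_sym[OF sg] sg_lt[OF sg] by fastforce
  let ?A1 = "adj_matrix a E1" and ?A2 = "adj_matrix b E2"
  have A1: "?A1 \<in> carrier_mat a a" and A2: "?A2 \<in> carrier_mat b b" by (simp_all add: adj_matrix_def)
  have blk: "adj_matrix n E = four_block_mat ?A1 (0\<^sub>m a b) (0\<^sub>m b a) ?A2"
  proof (rule eq_matI)
    fix i j assume i: "i < dim_row (four_block_mat ?A1 (0\<^sub>m a b) (0\<^sub>m b a) ?A2)"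
      and j: "j < dim_col (four_block_mat ?A1 (0\<^sub>m a b) (0\<^sub>m b a) ?A2)"
    hence i': "i < n" and j': "j < n" using nab by (simp_all add: adj_matrix_def)
    show "adj_matrix n E $$ (i, j) = four_block_mat ?A1 (0\<^sub>m a b) (0\<^sub>m b a) ?A2 $$ (i, j)"
      using i' j' nab noc noc' by (auto simp: adj_matrix_def E1_def E2_def)
  qed (auto simp: adj_matrix_def nab)
  show "det (adj_matrix n E) = det (adj_matrix a (\<lambda>i j. i < a \<and> j < a \<and> E i j)) * det (adj_matrix (n-a) (\<lambda>i j. E (i+a) (j+a)))"
    unfolding blk E1_def[symmetric] E2_def[symmetric] b_def[symmetric]
    by (rule det_four_block_mat_upper_right_zero[OF A1 refl _ A2]) simp
  let ?C1 = "map_mat complex_of_real ?A1" and ?C2 = "map_mat complex_of_real ?A2"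
  have C1: "?C1 \<in> carrier_mat a a" and C2: "?C2 \<in> carrier_mat b b" using A1 A2 by auto
  have cblk: "map_mat complex_of_real (adj_matrix n E) = four_block_mat ?C1 (0\<^sub>m a b) (0\<^sub>m b a) ?C2"
    unfolding blk by (subst map_four_block_mat[OF A1 _ _ A2]) (auto intro!: cong_four_block_mat)
  have cp: "char_poly (map_mat complex_of_real (adj_matrix n E)) = char_poly ?C1 * char_poly ?C2"
    by (rule char_poly_0_block[OF cblk _ _ C1 _ C2])
      (use char_poly_factorized[OF C1] char_poly_factorized[OF C2] in auto)
  have "proots (char_poly ?C1 * char_poly ?C2) = proots (char_poly ?C1) + proots (char_poly ?C2)"
    by (rule proots_mult) (use cp_nz[OF C1] cp_nz[OF C2] in auto)
  thus "energy n E = energy a (\<lambda>i j. i < a \<and> j < a \<and> E i j) + energy (n-a) (\<lambda>i j. E (i+a) (j+a))"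
    unfolding energy_def cp E1_def[symmetric] E2_def[symmetric] b_def[symmetric] by simp
  let ?f = "\<lambda>(i,j). (i+a, j+a)"
  have eq: "{(i,j). E i j} = {(i,j). E1 i j} \<union> ?f ` {(i,j). E2 i j}"
  proof (intro equalityI subsetI)
    fix x assume "x \<in> {(i,j). E i j}"
    then obtain i j where x: "x = (i,j)" and e: "E i j" by auto
    show "x \<in> {(i,j). E1 i j} \<union> ?f ` {(i,j). E2 i j}"
    proof (cases "i < a")
      case True
      hence "j < a" using noc e by (meson not_le)
      thus ?thesis using True e x unfolding E1_def by auto
    next
      case False
      hence "a \<le> j" using noc' e by (meson not_le)
      hence "(i-a, j-a) \<in> {(i,j). E2 i j}" using False e unfolding E2_def by auto
      hence "?f (i-a, j-a) \<in> ?f ` {(i,j). E2 i j}" by (rule imageI)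
      thus ?thesis using False \<open>a \<le> j\<close> x by auto
    qed
  next
    fix x assume "x \<in> {(i,j). E1 i j} \<union> ?f ` {(i,j). E2 i j}"
    thus "x \<in> {(i,j). E i j}" unfolding E1_def E2_def by auto
  qed
  have f1: "finite {(i,j). E1 i j}" using pairs_finite[OF s1] unfolding E1_def .
  have f2: "finite {(i,j). E2 i j}" using pairs_finite[OF s2] unfolding E2_def .
  have disj: "{(i,j). E1 i j} \<inter> ?f ` {(i,j). E2 i j} = {}" unfolding E1_def by auto
  have inj: "inj_on ?f {(i,j). E2 i j}" by (auto simp: inj_on_def)
  have "card {(i,j). E i j} = card {(i,j). E1 i j} + card (?f ` {(i,j). E2 i j})"
    unfolding eq using f1 f2 disj by (intro card_Un_disjoint) auto
  also have "card (?f ` {(i,j). E2 i j}) = card {(i,j). E2 i j}" by (rule card_image[OF inj])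
  finally show "card {(i,j). E i j} = card {(i,j). i < a \<and> j < a \<and> E i j} + card {(i,j). E (i+a) (j+a)}"
    unfolding E1_def E2_def .
qed

lemma rt_sym:
  assumes sg: "simple_graph n E" and r: "E\<^sup>*\<^sup>* x y" shows "E\<^sup>*\<^sup>* y x"
  using r
proof (induction rule: rtranclp_induct)
  case base thus ?case by simp
next
  case (step y z)
  have "E z y" using sg_sym[OF sg step(2)] .
  thus ?case using step(3) by (rule converse_rtranclp_into_rtranclp)
qed

lemma split_graph:
  assumes sg: "simple_graph n E" and n: "0 < n" and nc: "\<not> connected_graph n E"
  obtains p a where "p permutes {0..<n}" "0 < a" "a < n" "\<And>i j. i < a \<Longrightarrow> a \<le> j \<Longrightarrow> \<not> E (p i) (p j)"
proof -
  define S where "S = {j. j < n \<and> E\<^sup>*\<^sup>* 0 j}"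
  define T where "T = {j. j < n \<and> \<not> E\<^sup>*\<^sup>* 0 j}"
  have fS: "finite S" and fT: "finite T" unfolding S_def T_def by auto
  have ST: "S \<inter> T = {}" unfolding S_def T_def by auto
  have STu: "S \<union> T = {0..<n}" unfolding S_def T_def by auto
  have Tne: "T \<noteq> {}"
  proof
    assume "T = {}"
    hence all: "\<And>j. j < n \<Longrightarrow> E\<^sup>*\<^sup>* 0 j" unfolding T_def by auto
    have "connected_graph n E" unfolding connected_graph_def
    proof (intro allI impI)
      fix i j assume "i < n" "j < n"
      have "E\<^sup>*\<^sup>* i 0" using rt_sym[OF sg all[OF \<open>i < n\<close>]] .
      thus "E\<^sup>*\<^sup>* i j" using all[OF \<open>j < n\<close>] by (rule rtranclp_trans)
    qed
    thus False using nc by simp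
  qed
  define a where "a = card S"
  have cST: "card S + card T = n" using card_Un_disjoint[OF fS fT ST] STu by simp
  have a0: "0 < a" unfolding a_def using fS n by (auto simp: card_gt_0_iff S_def)
  have "card T > 0" using Tne fT by (simp add: card_gt_0_iff)
  hence an: "a < n" unfolding a_def using cST by linarith
  define xs where "xs = sorted_list_of_set S @ sorted_list_of_set T"
  have dxs: "distinct xs" unfolding xs_def using ST fS fT by auto
  have sxs: "set xs = {0..<n}" unfolding xs_def using fS fT STu by auto
  have lxs: "length xs = n" using distinct_card[OF dxs] sxs by simp
  define p where "p i = (if i < n then xs ! i else i)" for i
  have bij: "bij_betw p {0..<n} {0..<n}"
  proof -
    have "bij_betw (nth xs) {0..<n} {0..<n}"
    proof (rule bij_betw_imageI)
      show "inj_on (nth xs) {0..<n}" by (rule inj_on_nth[OF dxs]) (simp add: lxs)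
      have "nth xs ` {0..<n} = set xs" unfolding set_conv_nth using lxs by auto
      thus "nth xs ` {0..<n} = {0..<n}" using sxs by simp
    qed
    thus ?thesis by (rule bij_betw_cong[THEN iffD1, rotated]) (simp add: p_def)
  qed
  have perm: "p permutes {0..<n}" by (rule bij_imp_permutes[OF bij]) (simp add: p_def)
  have pS: "p i \<in> S" if "i < a" for i
  proof -
    have "i < length (sorted_list_of_set S)" using that unfolding a_def by simp
    hence "p i = sorted_list_of_set S ! i" using an that unfolding p_def xs_def by (simp add: nth_append)
    thus ?thesis using \<open>i < length (sorted_list_of_set S)\<close> fS by (metis nth_mem set_sorted_list_of_set)
  qed
  have pT: "p j \<in> T" if "a \<le> j" "j < n" for j
  proof -
    have l: "j - a < length (sorted_list_of_set T)" using that cST unfolding a_def by simp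
    have "p j = sorted_list_of_set T ! (j - a)" using that unfolding p_def xs_def a_def by (simp add: nth_append)
    thus ?thesis using l fT by (metis nth_mem set_sorted_list_of_set)
  qed
  have noc: "\<not> E (p i) (p j)" if "i < a" "a \<le> j" for i j
  proof
    assume e: "E (p i) (p j)"
    have jn: "j < n"
    proof (rule ccontr)
      assume "\<not> j < n"
      hence "p j = j" unfolding p_def by simp
      thus False using sg_lt[OF sg e] \<open>\<not> j < n\<close> by simp
    qed
    have "E\<^sup>*\<^sup>* 0 (p i)" using pS[OF that(1)] unfolding S_def by simp
    hence "E\<^sup>*\<^sup>* 0 (p j)" using e by (rule rtranclp.rtrancl_into_rtrancl)
    thus False using pT[OF that(2) jn] unfolding T_def by simp
  qed
  show ?thesis using that perm a0 an noc by blast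
qed

lemma order_ge2:
  assumes sg: "simple_graph k F" and d: "det (adj_matrix k F) \<noteq> 0" and k: "0 < k"
  shows "2 \<le> k"
proof (rule ccontr)
  assume "\<not> 2 \<le> k"
  hence k1: "k = 1" using k by simp
  have "k \<le> card {(i,j). F i j}" by (rule pairs_ge[OF sg d])
  moreover have "card {(i,j). F i j} \<le> k*k - k" by (rule pairs_le[OF sg])
  ultimately show False using k1 by simp
qed

lemma avg_eq: "simple_graph n E \<Longrightarrow> avg_degree n E = real (card {(i,j). E i j}) / real n"
  unfolding avg_degree_def using card_pairs[of n E] by simp

lemma comb_arith:
  fixes N a b x y :: real
  assumes N: "N > 0" "a + b = N"
  shows "a + (x - a)/N + (b + (y - b)/N) = N - 1 + (x+y)/N"
proof -
  have "(x - a)/N + (y - b)/N = (x + y - (a+b))/N" by (simp add: diff_divide_distrib add_divide_distrib)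
  also have "\<dots> = (x+y)/N - 1" using N by (simp add: diff_divide_distrib)
  finally show ?thesis using N(2) by linarith
qed

lemma main_ind:
  assumes conn_case: "\<And>n E. n \<ge> 5 \<Longrightarrow> simple_graph n E \<Longrightarrow> connected_graph n E \<Longrightarrow>
      det (adj_matrix n E) \<noteq> 0 \<Longrightarrow> energy n E \<ge> real n - 1 + avg_degree n E"
  shows "\<forall>E. 5 \<le> n \<longrightarrow> simple_graph n E \<longrightarrow> det (adj_matrix n E) \<noteq> 0 \<longrightarrow>
      energy n E \<ge> real n - 1 + avg_degree n E"
proof (induction n rule: less_induct)
  case (less n)
  show ?case
  proof (intro allI impI)
    fix E assume n5: "5 \<le> n" and sg: "simple_graph n E" and d: "det (adj_matrix n E) \<noteq> 0"
    show "energy n E \<ge> real n - 1 + avg_degree n E"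
    proof (cases "connected_graph n E")
      case True thus ?thesis using conn_case n5 sg d by blast
    next
      case False
      obtain p a where perm: "p permutes {0..<n}" and a0: "0 < a" and an: "a < n"
        and noc: "\<And>i j. i < a \<Longrightarrow> a \<le> j \<Longrightarrow> \<not> E (p i) (p j)"
        using split_graph[OF sg _ False] n5 by auto
      define E' where "E' = (\<lambda>i j. E (p i) (p j))"
      note rl = relabel[OF perm sg, folded E'_def]
      have noc': "\<And>i j. i < a \<Longrightarrow> a \<le> j \<Longrightarrow> \<not> E' i j" using noc unfolding E'_def by blast
      define E1 where "E1 = (\<lambda>i j. i < a \<and> j < a \<and> E' i j)"
      define E2 where "E2 = (\<lambda>i j. E' (i+a) (j+a))"
      define b where "b = n - a"
      note bl = block[OF rl(1) less_imp_le[OF an] noc', folded E1_def E2_def b_def]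
      have d1: "det (adj_matrix a E1) \<noteq> 0" and d2: "det (adj_matrix b E2) \<noteq> 0"
        using bl(3) rl(3) d by auto
      have b0: "0 < b" using an unfolding b_def by simp
      have a2: "2 \<le> a" by (rule order_ge2[OF bl(1) d1 a0])
      have b2: "2 \<le> b" by (rule order_ge2[OF bl(2) d2 b0])
      have nab: "n = a + b" unfolding b_def using an by simp
      have piece: "energy k F \<ge> real k + (real (card {(i,j). F i j}) - real k) / real n"
        if k: "k < n" "2 \<le> k" "k + 2 \<le> n" and sgF: "simple_graph k F" and dF: "det (adj_matrix k F) \<noteq> 0"
        for k F
      proof (cases "5 \<le> k")
        case True
        have ih: "energy k F \<ge> real k - 1 + avg_degree k F" using less.IH[OF k(1)] True sgF dF by blast
        define c where "c = real (card {(i,j). F i j})"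
        have ck: "real k \<le> c" unfolding c_def using pairs_ge[OF sgF dF] by simp
        have "(c - real k) / real n \<le> (c - real k) / real k"
          using ck k by (intro divide_left_mono) auto
        moreover have "(c - real k) / real k = c / real k - 1" using k by (simp add: field_simps)
        moreover have "avg_degree k F = c / real k" unfolding c_def by (rule avg_eq[OF sgF])
        ultimately show ?thesis using ih unfolding c_def[symmetric] by linarith
      next
        case False
        thus ?thesis using small[OF sgF dF k(2) _ n5 k(3)] by simp
      qed
      have p1: "energy a E1 \<ge> real a + (real (card {(i,j). E1 i j}) - real a) / real n"
        by (rule piece[OF an a2 _ bl(1) d1]) (use nab b2 in simp)
      have p2: "energy b E2 \<ge> real b + (real (card {(i,j). E2 i j}) - real b) / real n"
        by (rule piece[OF _ b2 _ bl(2) d2]) (use nab a2 in simp_all)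
      have en: "energy n E = energy a E1 + energy b E2" using bl(4) rl(2) by simp
      have cc: "card {(i,j). E i j} = card {(i,j). E1 i j} + card {(i,j). E2 i j}"
        using bl(5) rl(4) by simp
      have Npos: "real n > 0" using n5 by simp
      have Nab: "real a + real b = real n" using nab by simp
      have cE: "real (card {(i,j). E i j}) = real (card {(i,j). E1 i j}) + real (card {(i,j). E2 i j})"
        using cc by simp
      have "real a + (real (card {(i,j). E1 i j}) - real a) / real n
          + (real b + (real (card {(i,j). E2 i j}) - real b) / real n)
          = real n - 1 + real (card {(i,j). E i j}) / real n"
        unfolding cE by (rule comb_arith[OF Npos Nab])
      moreover have "avg_degree n E = real (card {(i,j). E i j}) / real n" by (rule avg_eq[OF sg])
      ultimately show ?thesis using en p1 p2 by linarith
    qed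
  qed
qed

theorem theorem3p6:
  assumes conn_case: "\<And>n E. n \<ge> 5 \<Longrightarrow> simple_graph n E \<Longrightarrow> connected_graph n E \<Longrightarrow>
      det (adj_matrix n E) \<noteq> 0 \<Longrightarrow> energy n E \<ge> real n - 1 + avg_degree n E"
  and "n \<ge> 5" and "simple_graph n E" and "det (adj_matrix n E) \<noteq> 0"
  shows "energy n E \<ge> real n - 1 + avg_degree n E"
  using main_ind[OF conn_case] assms(2-4) by blast

end
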